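(* Let $\mathcal{U}$ be a finite set, $\mathbf{a} \in \mathbb{Z}_{\geq 0}^{\mathcal{U}}$ with $F_1 = \sum_{i\in\mathcal{U}} \mathbf{a}_i > 0$, let $k > 0$ with $HH(k) = |\{i \in \mathcal{U} : \mathbf{a}_i \geq F_1/k\}| \geq 1$, let $h$ be a positive integer and $\delta \in (0,1)$. Let $f : \mathcal{U} \to [h]$ be a uniformly random function and \[ \tilde k = \big|\{ j \in [h] : \exists\, i \in f^{-1}(j) \text{ with } \mathbf{a}_i \geq F_1/k \}\big| . \] Then with probability at least $1-\delta$, \[ \frac{\tilde k}{HH(k)} \geq 1 - \frac{k}{\delta h}. \]
   Context: $[h] = \{1,\dots,h\}$. A uniformly random function assigns each element of $\mathcal{U}$ an independent uniform value in $[h]$. *)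

theory Defs
  imports "HOL-Probability.Probability"
begin

definition F1 :: "'a set \<Rightarrow> ('a \<Rightarrow> nat) \<Rightarrow> nat" where
  "F1 U a = (\<Sum>i\<in>U. a i)"

definition heavy :: "'a set \<Rightarrow> ('a \<Rightarrow> nat) \<Rightarrow> real \<Rightarrow> 'a set" where
  "heavy U a k = {i \<in> U. real (a i) \<ge> real (F1 U a) / k}"

definition HH :: "'a set \<Rightarrow> ('a \<Rightarrow> nat) \<Rightarrow> real \<Rightarrow> nat" where
  "HH U a k = card (heavy U a k)"

definition ktilde :: "'a set \<Rightarrow> ('a \<Rightarrow> nat) \<Rightarrow> real \<Rightarrow> nat \<Rightarrow> ('a \<Rightarrow> nat) \<Rightarrow> nat" where
  "ktilde U a k h f = card {j \<in> {1..h}. \<exists>i \<in> heavy U a k. f i = j}"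

definition unif_fun :: "'a set \<Rightarrow> nat \<Rightarrow> ('a \<Rightarrow> nat) pmf" where
  "unif_fun U h = pmf_of_set (U \<rightarrow>\<^sub>E {1..h})"

end

theory Submission
  imports Defs
begin

lemma pair_card:
  assumes fin: "finite U" and i: "i \<in> U" and j: "j \<in> U" and ij: "i \<noteq> j"
  shows "card ((U \<rightarrow>\<^sub>E B) \<inter> {f. f i = f j}) = card ((U - {i}) \<rightarrow>\<^sub>E B)"
proof -
  have "bij_betw (\<lambda>f. f(i:=undefined)) ((U \<rightarrow>\<^sub>E B) \<inter> {f. f i = f j}) ((U - {i}) \<rightarrow>\<^sub>E B)"
  proof (rule bij_betw_byWitness[where f' = "\<lambda>g. g(i := g j)"])
    show "\<forall>f\<in>(U \<rightarrow>\<^sub>E B) \<inter> {f. f i = f j}. (f(i := undefined))(i := (f(i := undefined)) j) = f"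
      using ij by (auto simp: fun_eq_iff)
    show "\<forall>g\<in>(U - {i}) \<rightarrow>\<^sub>E B. (g(i := g j))(i := undefined) = g"
      by (auto simp: fun_eq_iff PiE_def extensional_def)
    show "(\<lambda>f. f(i := undefined)) ` ((U \<rightarrow>\<^sub>E B) \<inter> {f. f i = f j}) \<subseteq> (U - {i}) \<rightarrow>\<^sub>E B"
      by (auto simp: PiE_def extensional_def Pi_def)
    show "(\<lambda>g. g(i := g j)) ` ((U - {i}) \<rightarrow>\<^sub>E B) \<subseteq> (U \<rightarrow>\<^sub>E B) \<inter> {f. f i = f j}"
      using i j ij by (auto simp: PiE_def extensional_def)
  qed
  thus ?thesis by (rule bij_betw_same_card)
qed

lemma pair_prob:
  assumes fin: "finite U" and i: "i \<in> U" and j: "j \<in> U" and ij: "i \<noteq> j" and h: "h > 0"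
  shows "measure_pmf.prob (unif_fun U h) {f. f i = f j} = 1 / real h"
proof -
  have ne: "U \<rightarrow>\<^sub>E {1..h} \<noteq> {}" using h by (simp add: PiE_eq_empty_iff)
  have fi: "finite (U \<rightarrow>\<^sub>E {1..h})" using fin by (simp add: finite_PiE)
  have c1: "card (U \<rightarrow>\<^sub>E {1..h}) = h ^ card U" using fin by (simp add: card_funcsetE)
  have c2: "card ((U - {i}) \<rightarrow>\<^sub>E {1..h}) = h ^ (card U - 1)" using fin i by (simp add: card_funcsetE)
  have cu: "card U = Suc (card U - 1)" proof -
    have "card U > 0" using fin i card_gt_0_iff by blast
    thus ?thesis by simp
  qed
  have "measure_pmf.prob (unif_fun U h) {f. f i = f j}
      = real (h ^ (card U - 1)) / real (h ^ card U)"
    unfolding unif_fun_def using ne fi c1 c2 pair_card[OF fin i j ij, of "{1..h}"]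
    by (simp add: measure_pmf_of_set)
  also have "\<dots> = 1 / real h" using h by (subst cu) (simp add: field_simps)
  finally show ?thesis .
qed

lemma collide_bound:
  fixes f :: "'a \<Rightarrow> nat"
  assumes "finite H"
  shows "card H \<le> card (f ` H) + card {p \<in> H \<times> H. fst p \<noteq> snd p \<and> f (fst p) = f (snd p)}"
proof -
  define S where "S = {i\<in>H. \<exists>j\<in>H. j \<noteq> i \<and> f j = f i}"
  have "S \<subseteq> fst ` {p \<in> H \<times> H. fst p \<noteq> snd p \<and> f (fst p) = f (snd p)}"
    unfolding S_def by (force simp: image_iff)
  hence cS: "card S \<le> card {p \<in> H \<times> H. fst p \<noteq> snd p \<and> f (fst p) = f (snd p)}"
  proof -
    have fX: "finite {p \<in> H \<times> H. fst p \<noteq> snd p \<and> f (fst p) = f (snd p)}" using assms by simp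
    have "card S \<le> card (fst ` {p \<in> H \<times> H. fst p \<noteq> snd p \<and> f (fst p) = f (snd p)})"
      using fX by (intro card_mono) (auto intro: \<open>S \<subseteq> _\<close>[THEN subsetD])
    also have "\<dots> \<le> card {p \<in> H \<times> H. fst p \<noteq> snd p \<and> f (fst p) = f (snd p)}"
      using fX by (rule card_image_le)
    finally show ?thesis .
  qed
  have inj: "inj_on f (H - S)" unfolding S_def inj_on_def by blast
  have "card (H - S) = card (f ` (H - S))" using inj by (simp add: card_image)
  also have "\<dots> \<le> card (f ` H)" using assms by (intro card_mono) auto
  finally have "card (H - S) \<le> card (f ` H)" .
  moreover have "card H \<le> card (H - S) + card S"
  proof -
    have SH: "S \<subseteq> H" unfolding S_def by auto
    hence "card (H - S) = card H - card S" using assms by (simp add: card_Diff_subset finite_subset)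
    moreover have "card S \<le> card H" using SH assms by (simp add: card_mono)
    ultimately show ?thesis by simp
  qed
  ultimately show ?thesis using cS by linarith
qed

theorem lemma6:
  fixes U :: "'a set" and a :: "'a \<Rightarrow> nat" and k :: real and h :: nat and \<delta> :: real
  assumes "finite U"
    and "F1 U a > 0"
    and "k > 0"
    and "HH U a k \<ge> 1"
    and "h > 0"
    and "0 < \<delta>" and "\<delta> < 1"
  shows "measure_pmf.prob (unif_fun U h)
           {f. real (ktilde U a k h f) / real (HH U a k) \<ge> 1 - k / (\<delta> * real h)}
         \<ge> 1 - \<delta>"
proof -
  define H where "H = heavy U a k"
  define m where "m = card H"
  define \<Omega> where "\<Omega> = U \<rightarrow>\<^sub>E {1..h}"
  define P where "P = {p \<in> H \<times> H. fst p \<noteq> snd p}"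
  define D where "D = (\<lambda>f::'a\<Rightarrow>nat. \<Sum>p\<in>P. indicator {g::'a\<Rightarrow>nat. g (fst p) = g (snd p)} f :: real)"
  have HU: "H \<subseteq> U" unfolding H_def heavy_def by auto
  have finH: "finite H" using HU assms(1) finite_subset by blast
  have m1: "m \<ge> 1" using assms(4) unfolding m_def H_def HH_def .
  have finP: "finite P" unfolding P_def using finH by auto
  have cardP: "card P = m * m - m"
  proof -
    have "P = H \<times> H - (\<lambda>x. (x,x)) ` H" unfolding P_def by auto
    moreover have "card ((\<lambda>x. (x,x)) ` H) = m" unfolding m_def by (simp add: card_image inj_on_def)
    ultimately show ?thesis using finH unfolding m_def
      by (simp add: card_Diff_subset card_cartesian_product image_subset_iff)
  qed
  have mk: "real m \<le> k"
  proof -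
    have F: "real (F1 U a) > 0" using assms(2) by simp
    have "real m * (real (F1 U a) / k) = (\<Sum>i\<in>H. real (F1 U a) / k)" unfolding m_def by simp
    also have "\<dots> \<le> (\<Sum>i\<in>H. real (a i))" by (intro sum_mono) (auto simp: H_def heavy_def)
    also have "\<dots> \<le> (\<Sum>i\<in>U. real (a i))" using HU assms(1) by (intro sum_mono2) auto
    also have "\<dots> = real (F1 U a)" unfolding F1_def by simp
    finally have "real m * (real (F1 U a) / k) \<le> real (F1 U a)" .
    thus ?thesis using F assms(3) by (simp add: field_simps)
  qed
  have ne: "\<Omega> \<noteq> {}" using assms(5) by (simp add: \<Omega>_def PiE_eq_empty_iff)
  have fi: "finite \<Omega>" using assms(1) by (simp add: \<Omega>_def finite_PiE)
  have setp: "set_pmf (unif_fun U h) = \<Omega>" unfolding unif_fun_def \<Omega>_def[symmetric] using ne fi by simp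
  have intD: "integrable (measure_pmf (unif_fun U h)) D"
    by (rule integrable_measure_pmf_finite) (simp add: setp fi)
  have ED: "measure_pmf.expectation (unif_fun U h) D = real (m*m - m) / real h"
  proof -
    have "measure_pmf.expectation (unif_fun U h) D
       = (\<Sum>p\<in>P. measure_pmf.expectation (unif_fun U h) (indicator {g::'a\<Rightarrow>nat. g (fst p) = g (snd p)}))"
      unfolding D_def by (rule Bochner_Integration.integral_sum) (simp add: measure_pmf.integrable_const_bound[where B=1])
    also have "\<dots> = (\<Sum>p\<in>P. 1 / real h)"
    proof (intro sum.cong refl)
      fix p assume p: "p \<in> P"
      hence "fst p \<in> U" "snd p \<in> U" "fst p \<noteq> snd p" using HU unfolding P_def by auto
      thus "measure_pmf.expectation (unif_fun U h) (indicator {g::'a\<Rightarrow>nat. g (fst p) = g (snd p)}) = 1 / real h"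
        using pair_prob[OF assms(1) _ _ _ assms(5)] by simp
    qed
    also have "\<dots> = real (m*m - m) / real h" using cardP by simp
    finally show ?thesis .
  qed
  have Dcard: "D f = real (card {p \<in> H \<times> H. fst p \<noteq> snd p \<and> f (fst p) = f (snd p)})" for f
  proof -
    have "D f = (\<Sum>p\<in>{p\<in>P. f (fst p) = f (snd p)}. 1)"
      unfolding D_def using finP by (simp add: indicator_def sum.If_cases Int_def conj_commute)
    also have "{p\<in>P. f (fst p) = f (snd p)} = {p \<in> H \<times> H. fst p \<noteq> snd p \<and> f (fst p) = f (snd p)}"
      unfolding P_def by auto
    finally show ?thesis by simp
  qed
  have kt: "ktilde U a k h f = card (f ` H)" if "f \<in> \<Omega>" for f
  proof -
    have "{j \<in> {1..h}. \<exists>i \<in> heavy U a k. f i = j} = f ` H"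
      using that HU unfolding \<Omega>_def H_def by (auto simp: PiE_def Pi_def)
    thus ?thesis unfolding ktilde_def by simp
  qed
  have keyD: "real m - real (ktilde U a k h f) \<le> D f" if "f \<in> \<Omega>" for f
    using collide_bound[OF finH, of f] kt[OF that] Dcard[of f] unfolding m_def by simp
  define c where "c = real m * k / (\<delta> * real h)"
  have cpos: "c > 0" unfolding c_def using m1 assms by auto
  define G where "G = {f. real (ktilde U a k h f) / real (HH U a k) \<ge> 1 - k / (\<delta> * real h)}"
  have mHH: "HH U a k = m" unfolding m_def H_def HH_def ..
  have sub: "(- G) \<inter> set_pmf (unif_fun U h) \<subseteq> {f \<in> space (measure_pmf (unif_fun U h)). D f \<ge> c}"
  proof
    fix f assume f: "f \<in> (- G) \<inter> set_pmf (unif_fun U h)"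
    hence fO: "f \<in> \<Omega>" using setp by auto
    from f have "real (ktilde U a k h f) / real m < 1 - k / (\<delta> * real h)" unfolding G_def mHH by auto
    hence "real (ktilde U a k h f) < real m * (1 - k / (\<delta> * real h))" using m1 by (simp add: field_simps)
    hence "c < real m - real (ktilde U a k h f)" unfolding c_def by (simp add: algebra_simps)
    thus "f \<in> {f \<in> space (measure_pmf (unif_fun U h)). D f \<ge> c}" using keyD[OF fO] by simp
  qed
  have "measure_pmf.prob (unif_fun U h) (- G) = measure_pmf.prob (unif_fun U h) ((- G) \<inter> set_pmf (unif_fun U h))"
    by (simp add: measure_Int_set_pmf)
  also have "\<dots> \<le> measure_pmf.prob (unif_fun U h) {f \<in> space (measure_pmf (unif_fun U h)). D f \<ge> c}"
    using sub by (intro measure_pmf.finite_measure_mono) auto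
  also have "\<dots> \<le> measure_pmf.expectation (unif_fun U h) D / c"
    by (rule integral_Markov_inequality_measure[OF intD, where A = UNIV]) (auto simp: D_def cpos intro!: sum_nonneg)
  also have "\<dots> = real (m*m - m) / real h / c" using ED by simp
  also have "\<dots> = \<delta> * (real m - 1) / k"
  proof -
    have "real (m*m - m) = real m * (real m - 1)" using m1 by (simp add: of_nat_diff algebra_simps le_square)
    thus ?thesis unfolding c_def using m1 assms by (simp add: field_simps)
  qed
  also have "\<dots> \<le> \<delta>"
  proof -
    have "\<delta> * (real m - 1) \<le> \<delta> * k" using mk assms by (intro mult_left_mono) auto
    thus ?thesis using assms by (simp add: field_simps)
  qed
  finally have "measure_pmf.prob (unif_fun U h) (- G) \<le> \<delta>" .
  moreover have "measure_pmf.prob (unif_fun U h) (- G) = 1 - measure_pmf.prob (unif_fun U h) G"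
    using measure_pmf.prob_compl[of G "unif_fun U h"] by (simp add: Compl_eq_Diff_UNIV)
  ultimately show ?thesis unfolding G_def by linarith
qed

end
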